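(* Let $\lambda,\mu\in\mathbb{C}$ and integers $m,N_T\ge1$. Let $E_\Delta^F=I-A_c^{-1}A_S$ and $E_\Delta^{FCF}=(I-A_c^{-1}A_S)(I-A_S)$ with $A_c=\mathcal{B}_{N_T}(\mu)$, $A_S=\mathcal{B}_{N_T}(\lambda^m)$. Then $E_\Delta^F$ is the lower triangular Toeplitz matrix whose $(i,j)$ entry is $(\lambda^m-\mu)\mu^{i-j-1}$ for $i>j$ and $0$ otherwise, and $E_\Delta^{FCF}$ is the lower triangular Toeplitz matrix whose $(i,j)$ entry is $(\lambda^m-\mu)\lambda^m\mu^{i-j-2}$ for $i\ge j+2$ and $0$ otherwise. Moreover, for every integer $k\ge1$ with $k\le N_T$, $$\|(E_\Delta^F)^k\|_1=\|(E_\Delta^F)^k\|_\infty=|\lambda^m-\mu|^k\sum_{j=0}^{N_T-k}\binom{j+k-1}{j}|\mu|^j,$$ and for every integer $k\ge1$ with $2k\le N_T$, $$\|(E_\Delta^{FCF})^k\|_1=\|(E_\Delta^{FCF})^k\|_\infty=|\lambda^m-\mu|^k|\lambda|^{mk}\sum_{j=0}^{N_T-2k}\binom{j+k-1}{j}|\mu|^j.$$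
   Context: For a scalar $g$, $\mathcal{B}_{N_T}(g)$ denotes the $(N_T+1)\times(N_T+1)$ matrix (rows/columns indexed $0,\dots,N_T$) with ones on the diagonal, $-g$ on the first subdiagonal, and zeros elsewhere. $\|\cdot\|_1$ and $\|\cdot\|_\infty$ are the maximum absolute column sum and maximum absolute row sum matrix norms. *)

theory Defs
  imports Complex_Main "Jordan_Normal_Form.Matrix"
begin

definition bidiag_mat :: "nat \<Rightarrow> complex \<Rightarrow> complex mat" where
  "bidiag_mat NT g = mat (NT + 1) (NT + 1)
     (\<lambda>(i, j). if i = j then 1 else if i = j + 1 then - g else 0)"

definition mat_inv :: "complex mat \<Rightarrow> complex mat" where
  "mat_inv A = (THE B. B \<in> carrier_mat (dim_row A) (dim_row A) \<and> A * B = 1\<^sub>m (dim_row A)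
                      \<and> B * A = 1\<^sub>m (dim_row A))"

definition norm1_mat :: "complex mat \<Rightarrow> real" where
  "norm1_mat A = Max ((\<lambda>j. \<Sum>i<dim_row A. cmod (A $$ (i, j))) ` {..<dim_col A})"

definition norm_inf_mat :: "complex mat \<Rightarrow> real" where
  "norm_inf_mat A = Max ((\<lambda>i. \<Sum>j<dim_col A. cmod (A $$ (i, j))) ` {..<dim_row A})"

end

theory Submission imports Defs begin

definition ltoe :: "nat \<Rightarrow> (nat \<Rightarrow> complex) \<Rightarrow> complex mat" where
  "ltoe n a = mat n n (\<lambda>(i,j). if j \<le> i then a (i-j) else 0)"

definition conv :: "(nat\<Rightarrow>complex) \<Rightarrow> (nat\<Rightarrow>complex) \<Rightarrow> nat \<Rightarrow> complex" where
  "conv a b p = (\<Sum>q\<le>p. a q * b (p-q))"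

definition dlt :: "nat \<Rightarrow> complex" where "dlt p = (if p = 0 then 1 else 0)"

lemma sum_rev_atMost: "(\<Sum>q\<le>(N::nat). f (N - q)) = (\<Sum>q\<le>N. (f q :: 'a::comm_monoid_add))"
  by (rule sum.reindex_bij_witness[where i="\<lambda>q. N - q" and j="\<lambda>q. N - q"]) auto

lemma conv_commute: "conv a b = conv b a"
proof
  fix p
  have "conv a b p = (\<Sum>q\<le>p. a (p - q) * b (p - (p - q)))"
    unfolding conv_def by (rule sum_rev_atMost[symmetric, where f="\<lambda>q. a q * b (p - q)"])
  also have "\<dots> = conv b a p" unfolding conv_def
    by (intro sum.cong) (auto simp: mult.commute)
  finally show "conv a b p = conv b a p" .
qed

lemma ltoe_carrier[simp]: "ltoe n a \<in> carrier_mat n n"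
  by (simp add: ltoe_def)
lemma ltoe_dim[simp]: "dim_row (ltoe n a) = n" "dim_col (ltoe n a) = n"
  by (simp_all add: ltoe_def)

lemma key_sum:
  assumes "i < n"
  shows "(\<Sum>l\<in>{0..<n}. (if l \<le> i then a (i-l) else 0) * (if j \<le> l then b (l-j) else (0::complex)))
        = (if j \<le> i then conv a b (i-j) else 0)"
proof (cases "j \<le> i")
  case False
  then show ?thesis by (simp, intro sum.neutral) auto
next
  case True
  have "(\<Sum>l\<in>{0..<n}. (if l \<le> i then a (i-l) else 0) * (if j \<le> l then b (l-j) else (0::complex)))
      = (\<Sum>l\<in>{j..i}. a (i-l) * b (l-j))"
    using assms by (intro sum.mono_neutral_cong_right) auto
  also have "\<dots> = (\<Sum>q\<le>i-j. a q * b (i-j-q))"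
    by (rule sum.reindex_bij_witness[where i="\<lambda>q. i - q" and j="\<lambda>l. i - l"]) (use True in auto)
  finally show ?thesis using True by (simp add: conv_def)
qed

lemma ltoe_mult: "ltoe n a * ltoe n b = ltoe n (conv a b)"
  by (rule eq_matI) (auto simp: index_mult_mat scalar_prod_def key_sum ltoe_def)

lemma ltoe_minus: "ltoe n a - ltoe n b = ltoe n (\<lambda>p. a p - b p)"
  by (rule eq_matI) (auto simp: ltoe_def)

lemma ltoe_one: "1\<^sub>m n = ltoe n dlt"
  by (rule eq_matI) (auto simp: ltoe_def dlt_def)

lemma conv_dlt: "conv dlt a = a"
proof
  fix p show "conv dlt a p = a p"
    unfolding conv_def dlt_def by (subst sum.atMost_shift) auto
qed

lemma conv_two: "conv (\<lambda>q. if q = 0 then x else if q = 1 then y else 0) a p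
   = (if p = 0 then x * a 0 else x * a p + y * a (p - 1))"
proof (cases p)
  case 0 then show ?thesis by (simp add: conv_def)
next
  case (Suc p')
  then show ?thesis
  proof (cases p')
    case 0 with Suc show ?thesis by (simp add: conv_def)
  next
    case (Suc p'')
    with \<open>p = Suc p'\<close> show ?thesis
      by (simp add: conv_def sum.atMost_Suc_shift del: sum.atMost_Suc)
  qed
qed

fun cpow :: "(nat\<Rightarrow>complex) \<Rightarrow> nat \<Rightarrow> nat \<Rightarrow> complex" where
  "cpow a 0 = dlt" | "cpow a (Suc k) = conv (cpow a k) a"

lemma ltoe_pow: "ltoe n a ^\<^sub>m k = ltoe n (cpow a k)"
  by (induction k) (simp_all add: ltoe_one ltoe_mult)

lemma mat_inv_eq:
  assumes A: "A \<in> carrier_mat n n" and B: "B \<in> carrier_mat n n"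
    and AB: "A * B = 1\<^sub>m n" and BA: "B * A = 1\<^sub>m n"
  shows "mat_inv A = B"
  unfolding mat_inv_def
proof (rule the_equality)
  show "B \<in> carrier_mat (dim_row A) (dim_row A) \<and> A * B = 1\<^sub>m (dim_row A) \<and> B * A = 1\<^sub>m (dim_row A)"
    using A B AB BA by auto
next
  fix C assume C: "C \<in> carrier_mat (dim_row A) (dim_row A) \<and> A * C = 1\<^sub>m (dim_row A) \<and> C * A = 1\<^sub>m (dim_row A)"
  then have Cc: "C \<in> carrier_mat n n" and CA: "C * A = 1\<^sub>m n" using A by auto
  have "C = C * (A * B)" using AB Cc by simp
  also have "\<dots> = (C * A) * B" using A B Cc by (simp add: assoc_mult_mat)
  also have "\<dots> = B" using CA B by simp
  finally show "C = B" .
qed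

definition hs :: "complex \<Rightarrow> complex \<Rightarrow> nat \<Rightarrow> nat \<Rightarrow> complex" where
  "hs a mu s p = (if s \<le> p then a * mu ^ (p - s) else 0)"

definition hk :: "complex \<Rightarrow> complex \<Rightarrow> nat \<Rightarrow> nat \<Rightarrow> nat \<Rightarrow> complex" where
  "hk a mu s k p = (if s * k \<le> p then a ^ k * mu ^ (p - s * k) * of_nat ((p - s * k + k - 1) choose (p - s * k)) else 0)"

lemma conv_hs_hk:
  assumes k: "k \<ge> 1"
  shows "conv (hs a mu s) (hk a mu s k) p = hk a mu s (Suc k) p"
proof (cases "s * Suc k \<le> p")
  case False
  have "conv (hs a mu s) (hk a mu s k) p = 0"
    unfolding conv_def
  proof (intro sum.neutral ballI)
    fix q assume "q \<in> {..p}"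
    have "\<not> (s \<le> q \<and> s * k \<le> p - q)"
      using False \<open>q \<in> {..p}\<close> by (auto simp: algebra_simps)
    then show "hs a mu s q * hk a mu s k (p - q) = 0"
      by (auto simp: hs_def hk_def)
  qed
  then show ?thesis using False by (simp add: hk_def)
next
  case True
  define N where "N = p - s * Suc k"
  have pN: "p = N + s + s * k" using True by (simp add: N_def algebra_simps)
  have "conv (hs a mu s) (hk a mu s k) p
     = (\<Sum>q\<in>{s..s+N}. a * mu ^ (q - s) * (a ^ k * mu ^ (p - q - s * k) *
            of_nat ((p - q - s * k + k - 1) choose (p - q - s * k))))"
    unfolding conv_def
    by (intro sum.mono_neutral_cong_right) (auto simp: pN hs_def hk_def)
  also have "\<dots> = (\<Sum>r\<le>N. a * mu ^ r * (a ^ k * mu ^ (N - r) *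
            of_nat ((N - r + k - 1) choose (N - r))))"
    by (rule sum.reindex_bij_witness[where i="\<lambda>r. r + s" and j="\<lambda>q. q - s"]) (auto simp: pN)
  also have "\<dots> = (\<Sum>r\<le>N. a ^ Suc k * mu ^ N * of_nat ((N - r + k - 1) choose (N - r)))"
  proof (intro sum.cong refl)
    fix r assume "r \<in> {..N}"
    then have "mu ^ r * mu ^ (N - r) = mu ^ N" by (simp flip: power_add)
    then show "a * mu ^ r * (a ^ k * mu ^ (N - r) * of_nat ((N - r + k - 1) choose (N - r)))
        = a ^ Suc k * mu ^ N * of_nat ((N - r + k - 1) choose (N - r))"
      by (simp add: algebra_simps)
  qed
  also have "\<dots> = a ^ Suc k * mu ^ N * of_nat (\<Sum>r\<le>N. ((N - r + k - 1) choose (N - r)))"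
    by (simp add: sum_distrib_left)
  also have "(\<Sum>r\<le>N. ((N - r + k - 1) choose (N - r))) = (\<Sum>r\<le>N. ((r + k - 1) choose r))"
    by (rule sum_rev_atMost[where f="\<lambda>r. (r + k - 1) choose r"])
  also have "\<dots> = (\<Sum>r\<le>N. ((k - 1 + r) choose r))"
    by (intro sum.cong refl) (metis add.commute k Nat.add_diff_assoc2)
  also have "\<dots> = Suc (k - 1 + N) choose N" by (rule sum_choose_lower)
  finally have 1: "conv (hs a mu s) (hk a mu s k) p = a ^ Suc k * mu ^ N * of_nat (Suc (k - 1 + N) choose N)" .
  have 2: "hk a mu s (Suc k) p = a ^ Suc k * mu ^ N * of_nat ((N + Suc k - 1) choose N)"
    using True unfolding hk_def N_def by simp
  have "Suc (k - 1 + N) = N + Suc k - 1" using k by simp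
  then show ?thesis using 1 2 by (simp add: add.commute)
qed

lemma cpow_hs: "k \<ge> 1 \<Longrightarrow> cpow (hs a mu s) k = hk a mu s k"
proof (induction k rule: dec_induct)
  case base
  show ?case by (auto simp: conv_dlt hs_def hk_def)
next
  case (step k)
  show ?case
  proof
    fix p
    show "cpow (hs a mu s) (Suc k) p = hk a mu s (Suc k) p"
      using step by (simp add: conv_commute[of _ "hs a mu s"] conv_hs_hk)
  qed
qed

lemma shift_sum:
  assumes "j \<le> (n::nat)"
  shows "(\<Sum>i<n. if j \<le> i then f (i - j) else 0) = (\<Sum>p<n - j. (f p :: real))"
proof -
  have "(\<Sum>i<n. if j \<le> i then f (i - j) else 0) = (\<Sum>i\<in>{j..<n}. f (i - j))"
    by (intro sum.mono_neutral_cong_right) auto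
  also have "\<dots> = (\<Sum>p<n - j. f p)"
    by (rule sum.reindex_bij_witness[where i="\<lambda>p. p + j" and j="\<lambda>i. i - j"]) auto
  finally show ?thesis .
qed

lemma row_sum:
  assumes "i < (n::nat)"
  shows "(\<Sum>j<n. if j \<le> i then f (i - j) else 0) = (\<Sum>q\<le>i. (f q :: real))"
proof -
  have "(\<Sum>j<n. if j \<le> i then f (i - j) else 0) = (\<Sum>j\<le>i. f (i - j))"
    using assms by (intro sum.mono_neutral_cong_right) auto
  also have "\<dots> = (\<Sum>q\<le>i. f q)" by (rule sum_rev_atMost)
  finally show ?thesis .
qed

lemma norm1_ltoe:
  assumes n: "n \<ge> 1"
  shows "norm1_mat (ltoe n a) = (\<Sum>p<n. cmod (a p))"
proof -
  have c: "(\<Sum>i<n. cmod (ltoe n a $$ (i,j))) = (\<Sum>p<n-j. cmod (a p))" if "j < n" for j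
  proof -
    have "(\<Sum>i<n. cmod (ltoe n a $$ (i,j))) = (\<Sum>i<n. if j \<le> i then cmod (a (i-j)) else 0)"
      using that by (intro sum.cong) (auto simp: ltoe_def)
    also have "\<dots> = (\<Sum>p<n-j. cmod (a p))" using that by (intro shift_sum) simp
    finally show ?thesis .
  qed
  have "norm1_mat (ltoe n a) = Max ((\<lambda>j. \<Sum>p<n-j. cmod (a p)) ` {..<n})"
    unfolding norm1_mat_def by (intro arg_cong[where f=Max] image_cong) (auto simp: c)
  also have "\<dots> = (\<Sum>p<n. cmod (a p))"
  proof (rule Max_eqI)
    fix y assume "y \<in> (\<lambda>j. \<Sum>p<n-j. cmod (a p)) ` {..<n}"
    then show "y \<le> (\<Sum>p<n. cmod (a p))"
      by (auto intro!: sum_mono2)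
  next
    show "(\<Sum>p<n. cmod (a p)) \<in> (\<lambda>j. \<Sum>p<n-j. cmod (a p)) ` {..<n}"
      using n by (intro image_eqI[where x=0]) auto
  qed simp
  finally show ?thesis .
qed

lemma norminf_ltoe:
  assumes n: "n \<ge> 1"
  shows "norm_inf_mat (ltoe n a) = (\<Sum>p<n. cmod (a p))"
proof -
  have c: "(\<Sum>j<n. cmod (ltoe n a $$ (i,j))) = (\<Sum>p\<le>i. cmod (a p))" if "i < n" for i
  proof -
    have "(\<Sum>j<n. cmod (ltoe n a $$ (i,j))) = (\<Sum>j<n. if j \<le> i then cmod (a (i-j)) else 0)"
      using that by (intro sum.cong) (auto simp: ltoe_def)
    also have "\<dots> = (\<Sum>p\<le>i. cmod (a p))" using that by (intro row_sum)
    finally show ?thesis .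
  qed
  have "norm_inf_mat (ltoe n a) = Max ((\<lambda>i. \<Sum>p\<le>i. cmod (a p)) ` {..<n})"
    unfolding norm_inf_mat_def by (intro arg_cong[where f=Max] image_cong) (auto simp: c)
  also have "\<dots> = (\<Sum>p<n. cmod (a p))"
  proof (rule Max_eqI)
    fix y assume "y \<in> (\<lambda>i. \<Sum>p\<le>i. cmod (a p)) ` {..<n}"
    then show "y \<le> (\<Sum>p<n. cmod (a p))"
      by (auto intro!: sum_mono2)
  next
    have "{..n-1} = {..<n}" using n by auto
    then show "(\<Sum>p<n. cmod (a p)) \<in> (\<lambda>i. \<Sum>p\<le>i. cmod (a p)) ` {..<n}"
      using n by (intro image_eqI[where x="n-1"]) auto
  qed simp
  finally show ?thesis .
qed

lemma norm_hk:
  assumes "s * k \<le> NT"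
  shows "(\<Sum>p<NT+1. cmod (hk a mu s k p)) = cmod a ^ k * (\<Sum>j=0..NT - s*k. real ((j+k-1) choose j) * cmod mu ^ j)"
proof -
  define f where "f j = cmod a ^ k * (real ((j+k-1) choose j) * cmod mu ^ j)" for j
  have "(\<Sum>p<NT+1. cmod (hk a mu s k p)) = (\<Sum>p<NT+1. if s*k \<le> p then f (p - s*k) else 0)"
    by (intro sum.cong) (auto simp: hk_def f_def norm_mult norm_power)
  also have "\<dots> = (\<Sum>j<NT+1-s*k. f j)" using assms by (intro shift_sum) simp
  also have "{..<NT+1-s*k} = {0..NT-s*k}" using assms by auto
  finally show ?thesis by (simp add: f_def sum_distrib_left)
qed

theorem mainTheorem2:
  fixes lam mu :: complex and m NT :: nat
  assumes "m \<ge> 1" and "NT \<ge> 1"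
  defines "Ac \<equiv> bidiag_mat NT mu"
      and "AS \<equiv> bidiag_mat NT (lam ^ m)"
  defines "EF \<equiv> 1\<^sub>m (NT + 1) - mat_inv Ac * AS"
  defines "EFCF \<equiv> (1\<^sub>m (NT + 1) - mat_inv Ac * AS) * (1\<^sub>m (NT + 1) - AS)"
  shows "EF = mat (NT + 1) (NT + 1)
            (\<lambda>(i, j). if i > j then (lam ^ m - mu) * mu ^ (i - j - 1) else 0) \<and>
         EFCF = mat (NT + 1) (NT + 1)
            (\<lambda>(i, j). if i \<ge> j + 2 then (lam ^ m - mu) * lam ^ m * mu ^ (i - j - 2) else 0) \<and>
         (\<forall>k::nat. 1 \<le> k \<and> k \<le> NT \<longrightarrow>
           norm1_mat (EF ^\<^sub>m k) = cmod (lam ^ m - mu) ^ k *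
              (\<Sum>j = 0..NT - k. real ((j + k - 1) choose j) * cmod mu ^ j) \<and>
           norm_inf_mat (EF ^\<^sub>m k) = cmod (lam ^ m - mu) ^ k *
              (\<Sum>j = 0..NT - k. real ((j + k - 1) choose j) * cmod mu ^ j)) \<and>
         (\<forall>k::nat. 1 \<le> k \<and> 2 * k \<le> NT \<longrightarrow>
           norm1_mat (EFCF ^\<^sub>m k) = cmod (lam ^ m - mu) ^ k * cmod lam ^ (m * k) *
              (\<Sum>j = 0..NT - 2 * k. real ((j + k - 1) choose j) * cmod mu ^ j) \<and>
           norm_inf_mat (EFCF ^\<^sub>m k) = cmod (lam ^ m - mu) ^ k * cmod lam ^ (m * k) *
              (\<Sum>j = 0..NT - 2 * k. real ((j + k - 1) choose j) * cmod mu ^ j))"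
proof -
  define L where "L = lam ^ m"
  define c where "c = L - mu"
  define n where "n = NT + 1"
  have n1: "n \<ge> 1" by (simp add: n_def)
  define bs where "bs g = (\<lambda>q::nat. if q = 0 then (1::complex) else if q = 1 then - g else 0)" for g
  have bid: "bidiag_mat NT g = ltoe n (bs g)" for g
    by (rule eq_matI) (auto simp: bidiag_mat_def ltoe_def bs_def n_def)
  define gm where "gm p = mu ^ p" for p
  have cg: "conv (bs mu) gm = dlt"
  proof
    fix p show "conv (bs mu) gm p = dlt p"
      unfolding bs_def conv_two by (cases p) (auto simp: gm_def dlt_def)
  qed
  have inv: "mat_inv Ac = ltoe n gm"
    unfolding Ac_def bid
    by (rule mat_inv_eq[where n=n]) (auto simp: ltoe_mult cg ltoe_one conv_commute[of gm])
  have one: "1\<^sub>m (NT + 1) = ltoe n dlt" unfolding n_def by (rule ltoe_one)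
  have EFe: "EF = ltoe n (hs c mu 1)"
  proof -
    have "EF = ltoe n (\<lambda>p. dlt p - conv (bs L) gm p)"
      unfolding EF_def one inv AS_def bid L_def
      by (simp add: ltoe_mult ltoe_minus conv_commute[of gm])
    also have "(\<lambda>p. dlt p - conv (bs L) gm p) = hs c mu 1"
    proof
      fix p show "dlt p - conv (bs L) gm p = hs c mu 1 p"
        unfolding bs_def conv_two by (cases p) (auto simp: gm_def dlt_def hs_def c_def algebra_simps)
    qed
    finally show ?thesis .
  qed
  have e1: "(\<lambda>p. dlt p - bs L p) = (\<lambda>q. if q = 0 then 0 else if q = 1 then L else 0)"
    by (auto simp: dlt_def bs_def)
  have EFCFe: "EFCF = ltoe n (hs (c * L) mu 2)"
  proof -
    have "EFCF = EF * (1\<^sub>m (NT + 1) - AS)" unfolding EFCF_def EF_def ..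
    also have "\<dots> = ltoe n (conv (\<lambda>q. if q = 0 then 0 else if q = 1 then L else 0) (hs c mu 1))"
      unfolding EFe AS_def bid L_def[symmetric] one
      by (simp add: ltoe_minus e1 ltoe_mult del: One_nat_def) (rule arg_cong[where f="ltoe n"], rule conv_commute)
    also have "conv (\<lambda>q. if q = 0 then 0 else if q = 1 then L else 0) (hs c mu 1) = hs (c * L) mu 2"
    proof
      fix p show "conv (\<lambda>q. if q = 0 then 0 else if q = 1 then L else 0) (hs c mu 1) p = hs (c * L) mu 2 p"
        unfolding conv_two by (cases p) (auto simp: hs_def algebra_simps numeral_2_eq_2)
    qed
    finally show ?thesis .
  qed
  have P1: "EF = mat (NT + 1) (NT + 1)
            (\<lambda>(i, j). if i > j then (lam ^ m - mu) * mu ^ (i - j - 1) else 0)"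
    unfolding EFe by (rule eq_matI) (auto simp: ltoe_def hs_def n_def c_def L_def)
  have P2: "EFCF = mat (NT + 1) (NT + 1)
            (\<lambda>(i, j). if i \<ge> j + 2 then (lam ^ m - mu) * lam ^ m * mu ^ (i - j - 2) else 0)"
    unfolding EFCFe by (rule eq_matI) (auto simp: ltoe_def hs_def n_def c_def L_def)
  have P3: "norm1_mat (EF ^\<^sub>m k) = cmod (lam ^ m - mu) ^ k *
              (\<Sum>j = 0..NT - k. real ((j + k - 1) choose j) * cmod mu ^ j) \<and>
           norm_inf_mat (EF ^\<^sub>m k) = cmod (lam ^ m - mu) ^ k *
              (\<Sum>j = 0..NT - k. real ((j + k - 1) choose j) * cmod mu ^ j)"
    if k: "1 \<le> k" "k \<le> NT" for k
  proof -
    have "EF ^\<^sub>m k = ltoe n (hk c mu 1 k)" unfolding EFe ltoe_pow using k by (simp add: cpow_hs)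
    moreover have "(\<Sum>p<n. cmod (hk c mu 1 k p)) = cmod c ^ k * (\<Sum>j=0..NT - 1*k. real ((j+k-1) choose j) * cmod mu ^ j)"
      unfolding n_def using k by (intro norm_hk) simp
    ultimately show ?thesis using n1 by (simp add: norm1_ltoe norminf_ltoe c_def L_def)
  qed
  have P4: "norm1_mat (EFCF ^\<^sub>m k) = cmod (lam ^ m - mu) ^ k * cmod lam ^ (m * k) *
              (\<Sum>j = 0..NT - 2 * k. real ((j + k - 1) choose j) * cmod mu ^ j) \<and>
           norm_inf_mat (EFCF ^\<^sub>m k) = cmod (lam ^ m - mu) ^ k * cmod lam ^ (m * k) *
              (\<Sum>j = 0..NT - 2 * k. real ((j + k - 1) choose j) * cmod mu ^ j)"
    if k: "1 \<le> k" "2 * k \<le> NT" for k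
  proof -
    have "EFCF ^\<^sub>m k = ltoe n (hk (c * L) mu 2 k)" unfolding EFCFe ltoe_pow using k by (simp add: cpow_hs)
    moreover have "(\<Sum>p<n. cmod (hk (c * L) mu 2 k p)) = cmod (c * L) ^ k * (\<Sum>j=0..NT - 2*k. real ((j+k-1) choose j) * cmod mu ^ j)"
      unfolding n_def using k by (intro norm_hk) simp
    moreover have "cmod (c * L) ^ k = cmod (lam ^ m - mu) ^ k * cmod lam ^ (m * k)"
      by (simp add: c_def L_def norm_mult norm_power power_mult_distrib power_mult)
    ultimately show ?thesis using n1 by (simp add: norm1_ltoe norminf_ltoe)
  qed
  show ?thesis using P1 P2 P3 P4 by blast
qed

end
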